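(* Let $0<n<m$ be real numbers, $N\ge 2$ an integer, and let $V(r)=-\frac{c_n}{r^n}+\frac{c_m}{r^m}$ for $r>0$, where $c_n,c_m>0$ are chosen so that $V$ attains its minimum at $a=\frac1N$. Let $\kappa=V''(a)$ and $f>0$, and consider \[ U(z_1,\dots,z_{N-1})=\sum_{k=1}^{N-1}V(z_k-z_{k-1})-f\,z_{N-1},\qquad z_0=0, \] on the set $0=z_0<z_1<\dots<z_{N-1}$. Call a fixed point a configuration in this set at which $\partial U/\partial z_k=0$ for all $k=1,\dots,N-1$ (i.e. an equilibrium, with zero momenta, of the Hamiltonian $H=\sum_{k=1}^{N-1}\frac{p_k^2}{2m_0}+U$ for any particle mass $m_0>0$). Then a fixed point exists if and only if \[ \sigma:=\frac{f}{\kappa}\le \frac{C}{N},\qquad C=C(n,m)=\frac{1}{m-n}\left(\Bigl(\frac{m+1}{n+1}\Bigr)^{-\frac{n+1}{m-n}}-\Bigl(\frac{m+1}{n+1}\Bigr)^{-\frac{m+1}{m-n}}\right). \] *)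

theory Defs
  imports "HOL-Analysis.Analysis"
begin

definition LJV :: "real \<Rightarrow> real \<Rightarrow> real \<Rightarrow> real \<Rightarrow> real \<Rightarrow> real" where
  "LJV n m cn cm r = - cn / (r powr n) + cm / (r powr m)"

text \<open>Potential energy U(z_1,...,z_{N-1}) = sum_{k=1}^{N-1} V(z_k - z_{k-1}) - f z_{N-1}, with z_0 = 0.
  Configurations are represented as functions nat => real; only the values at 0..N-1 matter.\<close>
definition chainU :: "(real \<Rightarrow> real) \<Rightarrow> nat \<Rightarrow> real \<Rightarrow> (nat \<Rightarrow> real) \<Rightarrow> real" where
  "chainU V N f z = (\<Sum>k = 1..N - 1. V (z k - z (k - 1))) - f * z (N - 1)"

definition chain_config :: "nat \<Rightarrow> (nat \<Rightarrow> real) \<Rightarrow> bool" where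
  "chain_config N z \<longleftrightarrow> z 0 = 0 \<and> (\<forall>k \<in> {1..N - 1}. z (k - 1) < z k)"

definition chain_fixed_point :: "(real \<Rightarrow> real) \<Rightarrow> nat \<Rightarrow> real \<Rightarrow> (nat \<Rightarrow> real) \<Rightarrow> bool" where
  "chain_fixed_point V N f z \<longleftrightarrow> chain_config N z \<and>
     (\<forall>k \<in> {1..N - 1}. ((\<lambda>t. chainU V N f (z(k := t))) has_real_derivative 0) (at (z k)))"

definition Cnm :: "real \<Rightarrow> real \<Rightarrow> real" where
  "Cnm n m = 1 / (m - n) * (((m + 1) / (n + 1)) powr (- (n + 1) / (m - n))
                           - ((m + 1) / (n + 1)) powr (- (m + 1) / (m - n)))"

end

theory Submission imports Defs begin

definition V1 :: "real \<Rightarrow> real \<Rightarrow> real \<Rightarrow> real \<Rightarrow> real \<Rightarrow> real" where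
  "V1 n m cn cm r = n*cn*r powr (-n-1) - m*cm*r powr (-m-1)"
definition V2 :: "real \<Rightarrow> real \<Rightarrow> real \<Rightarrow> real \<Rightarrow> real \<Rightarrow> real" where
  "V2 n m cn cm r = n*cn*(-n-1)*r powr (-n-2) - m*cm*(-m-1)*r powr (-m-2)"

lemma LJV_alt: "r > 0 \<Longrightarrow> LJV n m cn cm r = -cn * r powr (-n) + cm * r powr (-m)"
  by (simp add: LJV_def powr_minus_divide)

lemma DV1: assumes "r > 0" shows "(LJV n m cn cm has_real_derivative V1 n m cn cm r) (at r)"
proof -
  have "((\<lambda>r. -cn * r powr (-n) + cm * r powr (-m)) has_real_derivative V1 n m cn cm r) (at r)"
    using assms by (auto intro!: derivative_eq_intros simp: V1_def algebra_simps)
  then show ?thesis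
    by (rule has_field_derivative_transform_within_open[where S="{0<..}"]) (use assms in \<open>auto simp: LJV_alt\<close>)
qed

lemma DV2: assumes "r > 0" shows "(V1 n m cn cm has_real_derivative V2 n m cn cm r) (at r)"
  unfolding V1_def[abs_def]
  using assms by (auto intro!: derivative_eq_intros simp: V2_def algebra_simps)

lemma deriv2: assumes "r > 0" shows "deriv (deriv (LJV n m cn cm)) r = V2 n m cn cm r"
proof -
  have "(deriv (LJV n m cn cm) has_real_derivative V2 n m cn cm r) (at r)"
    by (rule has_field_derivative_transform_within_open[OF DV2[OF assms], where S="{0<..}"])
       (use assms in \<open>auto intro!: DERIV_imp_deriv[symmetric] DV1\<close>)
  then show ?thesis by (rule DERIV_imp_deriv)
qed

definition G :: "real \<Rightarrow> real \<Rightarrow> real" where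
  "G n m = ((m + 1) / (n + 1)) powr (- (n + 1) / (m - n)) - ((m + 1) / (n + 1)) powr (- (m + 1) / (m - n))"

lemma us_facts:
  fixes n m :: real
  assumes "0 < n" "n < m"
  defines "q \<equiv> (m + 1) / (n + 1)"
  defines "us \<equiv> q powr (-1/(m-n))"
  shows "us > 0" "us \<le> 1" "us powr (n+1) = q powr (- (n + 1) / (m - n))"
    "us powr (m+1) = q powr (- (m + 1) / (m - n))" "us powr (m+1) = us powr (n+1) * ((n+1)/(m+1))"
proof -
  have q1: "q > 1" unfolding q_def using assms(1,2) by (subst less_divide_eq_1_pos) auto
  show "us > 0" using q1 by (simp add: us_def)
  show "us \<le> 1" unfolding us_def using q1 assms
    by (intro less_imp_le powr_less_one) (auto simp: divide_neg_pos)
  show a: "us powr (n+1) = q powr (- (n + 1) / (m - n))" unfolding us_def powr_powr by (intro arg_cong[where f="\<lambda>x. q powr x"]) (use assms(1,2) in \<open>simp add: field_simps\<close>)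
  show b: "us powr (m+1) = q powr (- (m + 1) / (m - n))" unfolding us_def powr_powr by (intro arg_cong[where f="\<lambda>x. q powr x"]) (use assms(1,2) in \<open>simp add: field_simps\<close>)
  have e: "(n+1)+(m-n) = m+1" by simp
  have "us powr (m+1) = us powr (n+1) * us powr (m-n)" using powr_add[of us "n+1" "m-n"] by (simp only: e)
  moreover have "us powr (m-n) = 1/q" unfolding us_def powr_powr using assms q1
    by (simp add: powr_minus_divide)
  ultimately show "us powr (m+1) = us powr (n+1) * ((n+1)/(m+1))" by (simp add: q_def)
qed

lemma h_max:
  fixes n m u :: real
  assumes "0 < n" "n < m" "u > 0"
  shows "u powr (n+1) - u powr (m+1) \<le> G n m"
proof -
  define q where "q = (m + 1) / (n + 1)"
  define us where "us = q powr (-1/(m-n))"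
  define p where "p = (n+1)/(m+1)"
  note uf = us_facts[OF assms(1,2), folded q_def, folded us_def]
  define w where "w = u / us"
  have w: "w > 0" using uf assms by (simp add: w_def)
  have u: "u = us * w" using uf by (simp add: w_def)
  have p: "0 \<le> p" "p \<le> 1" using assms by (auto simp: p_def)
  have Y: "(w powr (m+1)) powr p * 1 powr (1-p) \<le> p * w powr (m+1) + (1-p) * 1"
    by (rule Youngs_inequality_0) (use p w in auto)
  have "(w powr (m+1)) powr p = w powr (n+1)" using assms by (simp add: powr_powr p_def)
  with Y have Y2: "w powr (n+1) \<le> p * w powr (m+1) + (1-p)" by simp
  have "u powr (n+1) - u powr (m+1) = us powr (n+1) * (w powr (n+1) - p * w powr (m+1))"
    using uf w by (simp add: u powr_mult p_def algebra_simps)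
  also have "\<dots> \<le> us powr (n+1) * (1 - p)"
    using Y2 uf by (intro mult_left_mono) auto
  also have "\<dots> = G n m" using uf by (simp add: G_def p_def q_def algebra_simps)
  finally show ?thesis .
qed

lemma h_ivt:
  fixes n m t :: real
  assumes "0 < n" "n < m" "0 \<le> t" "t \<le> G n m"
  shows "\<exists>u>0. u powr (n+1) - u powr (m+1) = t"
proof -
  define q where "q = (m + 1) / (n + 1)"
  define us where "us = q powr (-1/(m-n))"
  note uf = us_facts[OF assms(1,2), folded q_def, folded us_def]
  have "\<exists>x. us \<le> x \<and> x \<le> 1 \<and> x powr (n+1) - x powr (m+1) = t"
  proof (rule IVT2')
    show "1 powr (n+1) - 1 powr (m+1) \<le> t" using assms by simp
    show "t \<le> us powr (n+1) - us powr (m+1)" using assms uf by (simp add: G_def q_def)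
    show "us \<le> 1" by (rule uf)
    show "continuous_on {us..1} (\<lambda>x. x powr (n+1) - x powr (m+1))"
      using uf by (intro continuous_intros) auto
  qed
  then show ?thesis using uf by (metis less_le_trans)
qed

lemma upd_deriv: "((\<lambda>t. (z(k:=t)) i) has_real_derivative (if i = k then 1 else 0)) (at x)"
  by (cases "i = k") (auto intro!: derivative_eq_intros)

lemma dU:
  fixes V V1 :: "real \<Rightarrow> real" and z :: "nat \<Rightarrow> real"
  assumes dV: "\<And>r. r>0 \<Longrightarrow> (V has_real_derivative V1 r) (at r)"
    and cfg: "chain_config N z" and k: "k \<in> {1..N-1}"
  shows "((\<lambda>t. chainU V N f (z(k:=t))) has_real_derivative
     (\<Sum>j=1..N-1. V1 (z j - z (j-1)) * ((if j = k then 1 else 0) - (if j - 1 = k then 1 else 0)))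
      - f * (if N - 1 = k then 1 else 0)) (at (z k))"
  unfolding chainU_def
proof (intro DERIV_diff DERIV_sum DERIV_cmult upd_deriv)
  fix j assume j: "j \<in> {1..N-1}"
  have pos: "z j - z (j-1) > 0" using cfg j by (auto simp: chain_config_def)
  have i: "((\<lambda>t. (z(k:=t)) j - (z(k:=t)) (j-1)) has_real_derivative
     ((if j = k then 1 else 0) - (if j - 1 = k then 1 else 0))) (at (z k))"
    by (intro DERIV_diff upd_deriv)
  have "((\<lambda>t. V ((z(k:=t)) j - (z(k:=t)) (j-1))) has_real_derivative
     V1 (z j - z (j-1)) * ((if j = k then 1 else 0) - (if j - 1 = k then 1 else 0))) (at (z k))"
    using DERIV_chain2[OF _ i, of V "V1 (z j - z (j-1))"] dV[OF pos] by simp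
  then show "((\<lambda>t. V ((z(k:=t)) j - (z(k:=t)) (j-1))) has_real_derivative
     V1 (z j - z (j-1)) * ((if j = k then 1 else 0) - (if j - 1 = k then 1 else 0))) (at (z k))" .
qed


theorem lemma1:
  fixes n m cn cm f :: real and N :: nat
  assumes "0 < n" and "n < m" and "N \<ge> 2"
    and "cn > 0" and "cm > 0"
    and "\<forall>r > 0. LJV n m cn cm (1 / real N) \<le> LJV n m cn cm r"
    and "f > 0"
  shows "(\<exists>z. chain_fixed_point (LJV n m cn cm) N f z) \<longleftrightarrow>
         f / deriv (deriv (LJV n m cn cm)) (1 / real N) \<le> Cnm n m / real N"
proof -
  define a where "a = 1 / real N"
  have a0: "a > 0" using assms(3) by (simp add: a_def)
  have V1a: "V1 n m cn cm a = 0"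
  proof (rule DERIV_local_min[OF DV1[OF a0] a0])
    show "\<forall>y. \<bar>a - y\<bar> < a \<longrightarrow> LJV n m cn cm a \<le> LJV n m cn cm y"
      using assms(6) unfolding a_def[symmetric] by auto
  qed
  define K where "K = n * cn * a powr (-n-1)"
  have K0: "K > 0" using assms a0 by (simp add: K_def)
  have Km: "m * cm * a powr (-m-1) = K" using V1a by (simp add: V1_def K_def)
  have pw: "c * a powr (-p-1) * (a/r) powr (p+1) = c * r powr (-p-1)" if "r > 0" for c p r
  proof -
    have "a powr (-p-1) * a powr (p+1) = 1" using a0 by (simp add: powr_add[symmetric])
    moreover have "(a/r) powr (p+1) = a powr (p+1) * r powr (-p-1)"
    proof -
      have "r powr (-p-1) = inverse (r powr (p+1))" using powr_minus[of r "p+1"] by (simp add: minus_add_distrib)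
      then show ?thesis using a0 that powr_divide[of a r "p+1"] by (simp add: divide_inverse)
    qed
    ultimately show ?thesis by (metis (no_types, lifting) mult.assoc mult.left_commute mult.right_neutral)
  qed
  have key1: "V1 n m cn cm r = K * ((a/r) powr (n+1) - (a/r) powr (m+1))" if "r > 0" for r
  proof -
    have "K * (a/r) powr (n+1) = n * cn * r powr (-n-1)" unfolding K_def using pw[OF that, of "n*cn" n] by simp
    moreover have "K * (a/r) powr (m+1) = m * cm * r powr (-m-1)" unfolding Km[symmetric] using pw[OF that, of "m*cm" m] by simp
    ultimately show ?thesis by (simp add: V1_def algebra_simps)
  qed
  have p2: "a powr (-p-2) * a = a powr (-p-1)" for p
  proof -
    have e: "-p-2+1 = -p-1" by simp
    have "a powr (-p-1) = a powr (-p-2) * a powr 1" using powr_add[of a "-p-2" 1] by (simp only: e)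
    then show ?thesis using a0 by simp
  qed
  have alg: "\<And>X Y. n*cn*(-n-1)*X - m*cm*(-m-1)*Y = (-(n+1))*(n*cn*X) + (m+1)*(m*cm*Y)"
    by (simp add: algebra_simps)
  have "V2 n m cn cm a * a = n*cn*(-n-1)*(a powr (-n-2) * a) - m*cm*(-m-1)*(a powr (-m-2) * a)"
    unfolding V2_def by (simp only: left_diff_distrib mult.assoc)
  also have "\<dots> = n*cn*(-n-1)*a powr (-n-1) - m*cm*(-m-1)*a powr (-m-1)" by (simp only: p2)
  also have "\<dots> = (-(n+1)) * (n*cn*a powr (-n-1)) + (m+1) * (m*cm*a powr (-m-1))" 
    by (rule alg)
  finally have "V2 n m cn cm a * a = (-(n+1)) * (n*cn*a powr (-n-1)) + (m+1) * (m*cm*a powr (-m-1))" .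
  then have "V2 n m cn cm a * a = K * (m - n)" unfolding Km K_def[symmetric] by (simp add: algebra_simps)
  then have D: "deriv (deriv (LJV n m cn cm)) (1 / real N) = K * (m-n) / a"
    using deriv2[OF a0] a0 unfolding a_def[symmetric] by (simp add: field_simps)
  have Cnm: "Cnm n m = G n m / (m - n)" by (simp add: Cnm_def G_def)
  have cond: "f / deriv (deriv (LJV n m cn cm)) (1 / real N) \<le> Cnm n m / real N \<longleftrightarrow> f \<le> K * G n m"
  proof -
    have "Cnm n m / real N = G n m * a / (m - n)" unfolding Cnm a_def by simp
    moreover have "f / (K * (m-n) / a) = f * a / (K * (m-n))" by simp
    ultimately have "f / deriv (deriv (LJV n m cn cm)) (1 / real N) \<le> Cnm n m / real N \<longleftrightarrow>
       f * a / (K * (m-n)) \<le> G n m * a / (m - n)" using D by simp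
    also have "\<dots> \<longleftrightarrow> f * a \<le> G n m * a * K" using K0 assms(2)
      by (simp add: divide_le_eq divide_right_mono_neg pos_divide_le_eq pos_le_divide_eq mult.commute mult.left_commute)
    also have "\<dots> \<longleftrightarrow> f \<le> K * G n m" using a0 by (simp add: mult.commute mult.left_commute)
    finally show ?thesis .
  qed
  have ex: "(\<exists>r>0. V1 n m cn cm r = f) \<longleftrightarrow> f \<le> K * G n m"
  proof
    assume "\<exists>r>0. V1 n m cn cm r = f"
    then obtain r where r: "r > 0" "V1 n m cn cm r = f" by blast
    have "(a/r) powr (n+1) - (a/r) powr (m+1) \<le> G n m" using h_max[OF assms(1,2)] a0 r by simp
    then show "f \<le> K * G n m" using r key1[OF r(1)] K0 by (metis mult_left_mono less_imp_le)
  next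
    assume f: "f \<le> K * G n m"
    obtain u where u: "u > 0" "u powr (n+1) - u powr (m+1) = f / K"
      using h_ivt[OF assms(1,2), of "f/K"] f K0 assms(7) by (auto simp: divide_le_eq mult.commute)
    have r: "a / u > 0" using a0 u by simp
    have "V1 n m cn cm (a/u) = f" using key1[OF r] u a0 K0 by simp
    then show "\<exists>r>0. V1 n m cn cm r = f" using r by blast
  qed
  have fp: "(\<exists>z. chain_fixed_point (LJV n m cn cm) N f z) \<longleftrightarrow> (\<exists>r>0. V1 n m cn cm r = f)"
  proof
    assume "\<exists>z. chain_fixed_point (LJV n m cn cm) N f z"
    then obtain z where z: "chain_fixed_point (LJV n m cn cm) N f z" by blast
    have cfg: "chain_config N z" using z by (simp add: chain_fixed_point_def)
    have k: "N - 1 \<in> {1..N-1}" using assms(3) by auto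
    have d0: "((\<lambda>t. chainU (LJV n m cn cm) N f (z(N-1:=t))) has_real_derivative 0) (at (z (N-1)))"
      using z k unfolding chain_fixed_point_def by blast
    note d1 = dU[OF DV1 cfg k, of n m cn cm f]
    have "(\<Sum>j=1..N-1. V1 n m cn cm (z j - z (j-1)) * ((if j = N-1 then 1 else 0) - (if j - 1 = N-1 then 1 else 0)))
      - f * (if N - 1 = N-1 then 1 else 0) = 0"
      using DERIV_unique[OF d1 d0] .
    moreover have "(\<Sum>j=1..N-1. V1 n m cn cm (z j - z (j-1)) * ((if j = N-1 then 1 else 0) - (if j - 1 = N-1 then 1 else 0)))
       = (\<Sum>j=1..N-1. if j = N-1 then V1 n m cn cm (z (N-1) - z (N-1-1)) else 0)"
      by (rule sum.cong) auto
    ultimately have "V1 n m cn cm (z (N-1) - z (N-1-1)) = f" using k by simp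
    moreover have "z (N-1-1) < z (N-1)" using cfg k unfolding chain_config_def by blast
    then have "z (N-1) - z (N-1-1) > 0" by simp
    ultimately show "\<exists>r>0. V1 n m cn cm r = f" by blast
  next
    assume "\<exists>r>0. V1 n m cn cm r = f"
    then obtain r where r: "r > 0" "V1 n m cn cm r = f" by blast
    define z where "z = (\<lambda>j::nat. real j * r)"
    have cfg: "chain_config N z" using r by (auto simp: chain_config_def z_def)
    have "chain_fixed_point (LJV n m cn cm) N f z"
      unfolding chain_fixed_point_def
    proof (intro conjI cfg ballI)
      fix k assume k: "k \<in> {1..N-1}"
      note d1 = dU[OF DV1 cfg k, of n m cn cm f]
      have "(\<Sum>j=1..N-1. V1 n m cn cm (z j - z (j-1)) * ((if j = k then 1 else 0) - (if j - 1 = k then 1 else 0)))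
        = (\<Sum>j=1..N-1. (if j = k then f else 0) - (if j = Suc k then f else 0))"
        by (rule sum.cong) (auto simp: z_def r of_nat_diff algebra_simps)
      also have "\<dots> = f - (if Suc k \<le> N - 1 then f else 0)"
        using k by (simp add: sum_subtractf)
      finally have "(\<Sum>j=1..N-1. V1 n m cn cm (z j - z (j-1)) * ((if j = k then 1 else 0) - (if j - 1 = k then 1 else 0)))
        - f * (if N - 1 = k then 1 else 0) = 0" using k by auto
      with d1 show "((\<lambda>t. chainU (LJV n m cn cm) N f (z(k := t))) has_real_derivative 0) (at (z k))" by simp
    qed
    then show "\<exists>z. chain_fixed_point (LJV n m cn cm) N f z" by blast
  qed
  show ?thesis using fp ex cond by simp
qed

end
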